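(* Assume (H4). Let $M,N\in\mathbb{N}$. The operator $T_{M,N}\colon X_{M}\to X_{M}$ has the same nonzero eigenvalues, with the same geometric and partial multiplicities, as the operator $\widehat{T}_{M,N}:=P_{M}T_{M,N}R_{M}\colon\widetilde{X}\to\widetilde{X}$. Moreover, if $\Phi\in X_{M}$ is an eigenvector of $T_{M,N}$ associated to a nonzero eigenvalue $\mu$, then $P_{M}\Phi\in\widetilde{X}$ is an eigenvector of $\widehat{T}_{M,N}$ associated to the same eigenvalue $\mu$.
   Context: Let $d\ge 1$ be an integer and $\tau>0$, $h\ge\tau$ real. $X$, $X^{+}$, $X^{\pm}$ are real normed spaces of functions $[-\tau,0]\to\mathbb{R}^{d}$, $[0,h]\to\mathbb{R}^{d}$, $[-\tau,h]\to\mathbb{R}^{d}$, respectively. For a function $u$ on $[-\tau,h]$, $u_{h}(\theta):=u(h+\theta)$, $\theta\in[-\tau,0]$. $V\colon X\times X^{+}\to X^{\pm}$ and $\mathcal{F}_{s}\colon X^{\pm}\to X^{+}$ are linear with $V(\phi,z)|_{[-\tau,0]}=\phi$. Let $\widetilde{X}\subseteq X$ and $\widetilde{X}^{+}\subseteq X^{+}$ be linear subspaces. For $M\in\mathbb{N}$, $X_{M}$ is a finite-dimensional space, $R_{M}\colon\widetilde{X}\to X_{M}$, $P_{M}\colon X_{M}\to X$ are linear with $R_{M}P_{M}=I_{X_{M}}$, $\mathcal{L}_{M}:=P_{M}R_{M}$, and $\Pi_{M}$ is the range of $P_{M}$. For $N\in\mathbb{N}$, analogously $X_{N}^{+}$,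 $R_{N}^{+}\colon\widetilde{X}^{+}\to X_{N}^{+}$, $P_{N}^{+}\colon X_{N}^{+}\to X^{+}$ with $R_{N}^{+}P_{N}^{+}=I_{X_{N}^{+}}$, and $\Pi_{N}^{+}$ the range of $P_{N}^{+}$. The operator $T_{M,N}\colon X_{M}\to X_{M}$ is defined by $T_{M,N}\Phi:=R_{M}V(P_{M}\Phi,P_{N}^{+}Z^{\ast})_{h}$, where $Z^{\ast}\in X_{N}^{+}$ is the (assumed unique) solution of $Z=R_{N}^{+}\mathcal{F}_{s}V(P_{M}\Phi,P_{N}^{+}Z)$. Hypothesis (H4): for all $M,N\in\mathbb{N}$, $\Pi_{M}\subseteq\Pi_{M+1}$, $\Pi_{N}^{+}\subseteq\Pi_{N+1}^{+}$, $\Pi_{M}\subseteq\widetilde{X}$, $\Pi_{N}^{+}\subseteq\widetilde{X}^{+}$, and for all $(\phi,z)\in\Pi_{M}\times\Pi_{N}^{+}$, $V(\phi,z)_{h}\in\widetilde{X}$ and $\mathcal{F}_{s}V(\phi,z)\in\widetilde{X}^{+}$. A partial multiplicity of an eigenvalue is the length of an associated Jordan chain. *)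

theory Defs
  imports "HOL-Analysis.Analysis" "HOL-Library.Function_Algebras"
begin

instantiation "fun" :: (type, real_vector) real_vector
begin
definition scaleR_fun :: "real \<Rightarrow> ('a \<Rightarrow> 'b) \<Rightarrow> 'a \<Rightarrow> 'b"
  where "scaleR_fun r f = (\<lambda>x. r *\<^sub>R f x)"
instance
  by standard (auto simp: scaleR_fun_def fun_eq_iff scaleR_add_right scaleR_add_left)
end

text \<open>A function on an interval [a,b] is represented by its extension by zero to the
  whole real line; hence the spaces X, X+, X+- are sets of functions real => real^d
  vanishing outside [-tau,0], [0,h], [-tau,h] respectively.\<close>

definition supported_in :: "real set \<Rightarrow> (real \<Rightarrow> 'v::zero) set \<Rightarrow> bool" where
  "supported_in I S \<longleftrightarrow> (\<forall>f\<in>S. \<forall>t. t \<notin> I \<longrightarrow> f t = 0)"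

definition restr :: "real \<Rightarrow> real \<Rightarrow> (real \<Rightarrow> 'v::zero) \<Rightarrow> real \<Rightarrow> 'v" where
  "restr a b u = (\<lambda>t. if t \<in> {a..b} then u t else 0)"

definition seg :: "real \<Rightarrow> real \<Rightarrow> (real \<Rightarrow> 'v::zero) \<Rightarrow> real \<Rightarrow> 'v" where
  "seg tau h u = (\<lambda>\<theta>. if \<theta> \<in> {-tau..0} then u (h + \<theta>) else 0)"

definition lin_on :: "'a::real_vector set \<Rightarrow> ('a \<Rightarrow> 'b::real_vector) \<Rightarrow> bool" where
  "lin_on S f \<longleftrightarrow> (\<forall>x\<in>S. \<forall>y\<in>S. f (x + y) = f x + f y) \<and> (\<forall>c. \<forall>x\<in>S. f (c *\<^sub>R x) = c *\<^sub>R f x)"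

definition lin2_on :: "'a::real_vector set \<Rightarrow> 'b::real_vector set \<Rightarrow> ('a \<Rightarrow> 'b \<Rightarrow> 'c::real_vector) \<Rightarrow> bool" where
  "lin2_on S1 S2 f \<longleftrightarrow>
     (\<forall>x\<in>S1. \<forall>y\<in>S2. \<forall>x'\<in>S1. \<forall>y'\<in>S2. f (x + x') (y + y') = f x y + f x' y') \<and>
     (\<forall>c. \<forall>x\<in>S1. \<forall>y\<in>S2. f (c *\<^sub>R x) (c *\<^sub>R y) = c *\<^sub>R f x y)"

definition finite_dim_subspace :: "'a::real_vector set \<Rightarrow> bool" where
  "finite_dim_subspace S \<longleftrightarrow> subspace S \<and> (\<exists>B. finite B \<and> B \<subseteq> S \<and> span B = S)"

text \<open>Z* = the (assumed unique) solution Z in X_N^+ of Z = R_N^+ F_s V(P_M Phi, P_N^+ Z)\<close>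
definition Zstar :: "'p set \<Rightarrow> ((real \<Rightarrow> 'v) \<Rightarrow> 'p) \<Rightarrow> ('p \<Rightarrow> real \<Rightarrow> 'v)
    \<Rightarrow> ((real \<Rightarrow> 'v) \<Rightarrow> (real \<Rightarrow> 'v)) \<Rightarrow> ((real \<Rightarrow> 'v) \<Rightarrow> (real \<Rightarrow> 'v) \<Rightarrow> (real \<Rightarrow> 'v))
    \<Rightarrow> ('m \<Rightarrow> real \<Rightarrow> 'v) \<Rightarrow> 'm \<Rightarrow> 'p" where
  "Zstar XN RN PN Fs V PM \<Phi> = (THE Z. Z \<in> XN \<and> Z = RN (Fs (V (PM \<Phi>) (PN Z))))"

definition T_MN :: "real \<Rightarrow> real \<Rightarrow> ((real \<Rightarrow> 'v::zero) \<Rightarrow> 'm) \<Rightarrow> ('m \<Rightarrow> real \<Rightarrow> 'v)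
    \<Rightarrow> 'p set \<Rightarrow> ((real \<Rightarrow> 'v) \<Rightarrow> 'p) \<Rightarrow> ('p \<Rightarrow> real \<Rightarrow> 'v)
    \<Rightarrow> ((real \<Rightarrow> 'v) \<Rightarrow> (real \<Rightarrow> 'v)) \<Rightarrow> ((real \<Rightarrow> 'v) \<Rightarrow> (real \<Rightarrow> 'v) \<Rightarrow> (real \<Rightarrow> 'v))
    \<Rightarrow> 'm \<Rightarrow> 'm" where
  "T_MN tau h RM PM XN RN PN Fs V \<Phi> =
     RM (seg tau h (V (PM \<Phi>) (PN (Zstar XN RN PN Fs V PM \<Phi>))))"

text \<open>The complexification of a real subspace S is represented as S x S, the pair (u,v)
  standing for u + i v.\<close>

definition cx :: "('a \<Rightarrow> 'a) \<Rightarrow> 'a \<times> 'a \<Rightarrow> 'a \<times> 'a" where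
  "cx A w = (A (fst w), A (snd w))"

definition cscale :: "complex \<Rightarrow> 'a::real_vector \<times> 'a \<Rightarrow> 'a \<times> 'a" where
  "cscale \<mu> w = (Re \<mu> *\<^sub>R fst w - Im \<mu> *\<^sub>R snd w, Re \<mu> *\<^sub>R snd w + Im \<mu> *\<^sub>R fst w)"

definition is_eigenvector :: "'a::real_vector set \<Rightarrow> ('a \<Rightarrow> 'a) \<Rightarrow> complex \<Rightarrow> 'a \<times> 'a \<Rightarrow> bool" where
  "is_eigenvector S A \<mu> w \<longleftrightarrow> w \<in> S \<times> S \<and> w \<noteq> 0 \<and> cx A w = cscale \<mu> w"

definition is_eigenvalue :: "'a::real_vector set \<Rightarrow> ('a \<Rightarrow> 'a) \<Rightarrow> complex \<Rightarrow> bool" where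
  "is_eigenvalue S A \<mu> \<longleftrightarrow> (\<exists>w. is_eigenvector S A \<mu> w)"

text \<open>complex dimension of a complex subspace W of S x S (real dimension divided by 2)\<close>
definition cdim :: "('a::real_vector \<times> 'a) set \<Rightarrow> nat" where
  "cdim W = dim W div 2"

definition geom_mult :: "'a::real_vector set \<Rightarrow> ('a \<Rightarrow> 'a) \<Rightarrow> complex \<Rightarrow> nat" where
  "geom_mult S A \<mu> = cdim {w \<in> S \<times> S. cx A w = cscale \<mu> w}"

definition jordan_chain :: "'a::real_vector set \<Rightarrow> ('a \<Rightarrow> 'a) \<Rightarrow> complex \<Rightarrow> ('a \<times> 'a) list \<Rightarrow> bool" where
  "jordan_chain S A \<mu> xs \<longleftrightarrow> xs \<noteq> [] \<and> set xs \<subseteq> S \<times> S \<and> is_eigenvector S A \<mu> (xs ! 0) \<and>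
     (\<forall>j. Suc j < length xs \<longrightarrow> cx A (xs ! Suc j) - cscale \<mu> (xs ! Suc j) = xs ! j)"

text \<open>The partial multiplicities r_1 >= r_2 >= ... of mu (lengths of the Jordan chains of a
  canonical system) are determined by the numbers #{i. r_i >= k}, k >= 1, which equal the
  complex dimension of the space spanned by the eigenvectors that start a Jordan chain of
  length k.  Two operators have the same partial multiplicities at mu iff these numbers agree
  for all k >= 1.\<close>
definition num_partial_mult_ge :: "'a::real_vector set \<Rightarrow> ('a \<Rightarrow> 'a) \<Rightarrow> complex \<Rightarrow> nat \<Rightarrow> nat" where
  "num_partial_mult_ge S A \<mu> k =
     cdim (span {xs ! 0 | xs. jordan_chain S A \<mu> xs \<and> length xs = k})"

definition same_partial_mults ::
  "'a::real_vector set \<Rightarrow> ('a \<Rightarrow> 'a) \<Rightarrow> 'b::real_vector set \<Rightarrow> ('b \<Rightarrow> 'b) \<Rightarrow> complex \<Rightarrow> bool" where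
  "same_partial_mults S A S' A' \<mu> \<longleftrightarrow>
     (\<forall>k\<ge>1. num_partial_mult_ge S A \<mu> k = num_partial_mult_ge S' A' \<mu> k)"

end

theory Submission
  imports Defs
begin

lemma lin_on_agree_span:
  fixes f g :: "'a::real_vector \<Rightarrow> 'b::real_vector"
  assumes U: "subspace U" and f: "lin_on U f" and g: "linear g"
    and B: "B \<subseteq> U" and agree: "\<forall>x\<in>B. g x = f x" and x: "x \<in> span B"
  shows "g x = f x"
proof -
  have "subspace {x. x \<in> U \<and> g x = f x}"
    unfolding subspace_def
  proof (intro conjI ballI allI)
    show "0 \<in> {x. x \<in> U \<and> g x = f x}"
      using U f linear_0[OF g] unfolding lin_on_def subspace_def
      by (metis (mono_tags, lifting) mem_Collect_eq scale_zero_left)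
  next
    fix x y assume "x \<in> {x. x \<in> U \<and> g x = f x}" "y \<in> {x. x \<in> U \<and> g x = f x}"
    then show "x + y \<in> {x. x \<in> U \<and> g x = f x}"
      using U f linear_add[OF g] unfolding lin_on_def subspace_def by auto
  next
    fix c x assume "x \<in> {x. x \<in> U \<and> g x = f x}"
    then show "c *\<^sub>R x \<in> {x. x \<in> U \<and> g x = f x}"
      using U f linear_scale[OF g] unfolding lin_on_def subspace_def by auto
  qed
  then show ?thesis using x B agree span_induct[of x B "\<lambda>x. x \<in> U \<and> g x = f x"]
    by auto
qed

lemma dim_image_lin:
  fixes f :: "'a::real_vector \<Rightarrow> 'b::real_vector"
  assumes lf: "linear f" and fi: "inj_on f (span S)"
  shows "dim (f ` S) = dim S"
proof -
  obtain B where B: "B \<subseteq> S" "independent B" "S \<subseteq> span B" "card B = dim S"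
    using basis_exists[of S] by auto
  then have spS: "span S = span B"
    by (meson span_mono span_span span_subspace subspace_span subset_antisym span_minimal)
  have cB: "card (f ` B) = card B"
    using fi card_image[of f B] inj_on_subset[of f "span S" B] B span_superset by auto
  have ind: "independent (f ` B)"
    using linear_dependent_inj_imageD[OF lf, of B] fi spS B(2) by auto
  have "dim (f ` S) = dim (span (f ` S))" by simp
  also have "span (f ` S) = f ` span S" using span_linear_image[OF lf] by blast
  also have "\<dots> = f ` span B" using spS by simp
  also have "\<dots> = span (f ` B)" using span_linear_image[OF lf] by blast
  finally show ?thesis using ind cB B(4) dim_span_eq_card_independent by metis
qed

lemma dim_image_lin_on:
  fixes f :: "'a::real_vector \<Rightarrow> 'b::real_vector"
  assumes U: "subspace U" and f: "lin_on U f" and inj: "inj_on f U" and S: "S \<subseteq> U"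
  shows "dim (f ` S) = dim S"
proof -
  obtain B where B: "B \<subseteq> S" "independent B" "S \<subseteq> span B" "card B = dim S"
    using basis_exists[of S] by auto
  obtain g where g: "linear g" "\<forall>x\<in>B. g x = f x"
    using linear_independent_extend[OF B(2)] by blast
  have spB: "span B \<subseteq> U" using B S U by (meson dual_order.trans span_minimal)
  have spS: "span S = span B"
    using B by (meson span_mono span_span span_subspace subspace_span subset_antisym span_minimal)
  have eq: "\<And>x. x \<in> span B \<Longrightarrow> g x = f x"
    using lin_on_agree_span[OF U f g(1)] B S g(2) by blast
  have "g ` S = f ` S" using eq B(3) by (auto simp: image_def) (metis subsetD)+
  moreover have "inj_on g (span S)"
    using inj spB spS eq by (smt (verit) inj_on_def subsetD)
  ultimately show ?thesis using dim_image_lin[OF g(1)] by metis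
qed


lemma cscale_cscale: "cscale a (cscale b w) = cscale (a * b) (w::'a::real_vector \<times> 'a)"
  by (simp add: cscale_def algebra_simps scaleR_add_right scaleR_diff_right)

lemma cscale_one: "cscale 1 w = w"
  by (simp add: cscale_def)

locale absset =
  fixes S :: "'a::real_vector set" and U :: "'b::real_vector set"
    and A :: "'a \<Rightarrow> 'a" and P :: "'a \<Rightarrow> 'b" and R :: "'b \<Rightarrow> 'a" and B :: "'b \<Rightarrow> 'b"
  assumes S: "subspace S" and U: "subspace U"
    and A: "lin_on S A" "\<And>x. x \<in> S \<Longrightarrow> A x \<in> S"
    and P: "lin_on S P" "\<And>x. x \<in> S \<Longrightarrow> P x \<in> U"
    and R: "lin_on U R" "\<And>x. x \<in> U \<Longrightarrow> R x \<in> S"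
    and RP: "\<And>x. x \<in> S \<Longrightarrow> R (P x) = x"
    and B: "B = (\<lambda>u. P (A (R u)))"
begin

lemma lin_on_facts:
  assumes "subspace W" "lin_on W f"
  shows "f 0 = 0" "\<And>x y. x \<in> W \<Longrightarrow> y \<in> W \<Longrightarrow> f (x - y) = f x - f y"
    "\<And>x y. x \<in> W \<Longrightarrow> y \<in> W \<Longrightarrow> f (x + y) = f x + f y"
    "\<And>c x. x \<in> W \<Longrightarrow> f (c *\<^sub>R x) = c *\<^sub>R f x"
proof -
  show "f 0 = 0" using assms unfolding lin_on_def subspace_def
    by (metis scale_zero_left)
  show "\<And>x y. x \<in> W \<Longrightarrow> y \<in> W \<Longrightarrow> f (x + y) = f x + f y"
    "\<And>c x. x \<in> W \<Longrightarrow> f (c *\<^sub>R x) = c *\<^sub>R f x" using assms(2) unfolding lin_on_def by auto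
  fix x y assume xy: "x \<in> W" "y \<in> W"
  have "x - y = x + (-1) *\<^sub>R y" by simp
  moreover have "(-1) *\<^sub>R y \<in> W" using assms(1) xy unfolding subspace_def by blast
  moreover have "f ((-1) *\<^sub>R y) = (-1) *\<^sub>R f y" using assms(2) xy unfolding lin_on_def by blast
  moreover have "f (x + (-1) *\<^sub>R y) = f x + f ((-1) *\<^sub>R y)"
    using assms(2) xy \<open>(-1) *\<^sub>R y \<in> W\<close> unfolding lin_on_def by blast
  ultimately show "f (x - y) = f x - f y" by simp
qed

definition Q :: "'a \<times> 'a \<Rightarrow> 'b \<times> 'b" where "Q w = (P (fst w), P (snd w))"
definition Rp :: "'b \<times> 'b \<Rightarrow> 'a \<times> 'a" where "Rp w = (R (fst w), R (snd w))"

lemmas SP = lin_on_facts[OF S P(1)]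
lemmas SA = lin_on_facts[OF S A(1)]
lemmas UR = lin_on_facts[OF U R(1)]

lemma Ssub: "x \<in> S \<Longrightarrow> y \<in> S \<Longrightarrow> x + y \<in> S" "x \<in> S \<Longrightarrow> c *\<^sub>R x \<in> S" "x \<in> S \<Longrightarrow> y \<in> S \<Longrightarrow> x - y \<in> S"
  using S by (auto simp: subspace_add subspace_scale subspace_diff)
lemma Usub: "x \<in> U \<Longrightarrow> y \<in> U \<Longrightarrow> x + y \<in> U" "x \<in> U \<Longrightarrow> c *\<^sub>R x \<in> U" "x \<in> U \<Longrightarrow> y \<in> U \<Longrightarrow> x - y \<in> U"
  using U by (auto simp: subspace_add subspace_scale subspace_diff)

lemma cs_S: "w \<in> S \<times> S \<Longrightarrow> cscale \<mu> w \<in> S \<times> S"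
  by (auto simp: cscale_def Ssub)
lemma cs_U: "w \<in> U \<times> U \<Longrightarrow> cscale \<mu> w \<in> U \<times> U"
  by (auto simp: cscale_def Usub)
lemma cxA_S: "w \<in> S \<times> S \<Longrightarrow> cx A w \<in> S \<times> S"
  by (auto simp: cx_def A)
lemma cxB_U: "w \<in> U \<times> U \<Longrightarrow> cx B w \<in> U \<times> U"
  by (auto simp: cx_def B A P R)

lemma Q_mem: "w \<in> S \<times> S \<Longrightarrow> Q w \<in> U \<times> U" by (auto simp: Q_def P)
lemma Rp_mem: "w \<in> U \<times> U \<Longrightarrow> Rp w \<in> S \<times> S" by (auto simp: Rp_def R)
lemma Q_cx: "w \<in> S \<times> S \<Longrightarrow> cx B (Q w) = Q (cx A w)"
  by (auto simp: Q_def cx_def B RP)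
lemma Rp_cx: "w \<in> U \<times> U \<Longrightarrow> cx A (Rp w) = Rp (cx B w)"
  by (auto simp: Rp_def cx_def B RP A R)
lemma Q_cs: "w \<in> S \<times> S \<Longrightarrow> Q (cscale \<mu> w) = cscale \<mu> (Q w)"
  by (auto simp: Q_def cscale_def SP Ssub)
lemma Rp_cs: "w \<in> U \<times> U \<Longrightarrow> Rp (cscale \<mu> w) = cscale \<mu> (Rp w)"
  by (auto simp: Rp_def cscale_def UR Usub)
lemma Q_diff: "w \<in> S \<times> S \<Longrightarrow> v \<in> S \<times> S \<Longrightarrow> Q (w - v) = Q w - Q v"
  by (auto simp: Q_def SP)
lemma Rp_diff: "w \<in> U \<times> U \<Longrightarrow> v \<in> U \<times> U \<Longrightarrow> Rp (w - v) = Rp w - Rp v"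
  by (auto simp: Rp_def UR)
lemma RpQ: "w \<in> S \<times> S \<Longrightarrow> Rp (Q w) = w"
  by (auto simp: Rp_def Q_def RP)
lemma Q_0: "Q 0 = 0" by (simp add: Q_def SP zero_prod_def)
lemma Rp_0: "Rp 0 = 0" by (simp add: Rp_def UR zero_prod_def)
lemma Q_inj: "inj_on Q (S \<times> S)"
  by (metis RpQ inj_onI)

lemma Q_lin: "lin_on (S \<times> S) Q"
  unfolding lin_on_def by (auto simp: Q_def SP)

lemma QRp:
  assumes w: "w \<in> U \<times> U" and mu: "\<mu> \<noteq> 0" and e: "cx B w = cscale \<mu> w"
  shows "Q (Rp w) = w"
proof -
  have cxBQ: "cx B w = Q (cx A (Rp w))"
    by (simp add: cx_def B Q_def Rp_def)
  have v: "cx A (Rp w) \<in> S \<times> S" using cxA_S Rp_mem w by blast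
  have "w = cscale (1/\<mu>) (cscale \<mu> w)" using mu by (simp add: cscale_cscale cscale_one)
  also have "\<dots> = Q (cscale (1/\<mu>) (cx A (Rp w)))" using e cxBQ Q_cs[OF v] by simp
  finally have wq: "w = Q (cscale (1/\<mu>) (cx A (Rp w)))" .
  then show ?thesis using RpQ cs_S[OF v] by metis
qed

lemma eig_Q: "is_eigenvector S A \<mu> w \<Longrightarrow> is_eigenvector U B \<mu> (Q w)"
  unfolding is_eigenvector_def
  by (metis Q_cs Q_cx Q_mem RpQ Rp_0)

lemma eig_Rp: "\<mu> \<noteq> 0 \<Longrightarrow> is_eigenvector U B \<mu> w \<Longrightarrow> is_eigenvector S A \<mu> (Rp w)"
  unfolding is_eigenvector_def
  by (metis QRp Q_0 Rp_cs Rp_cx Rp_mem)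


lemma jc_Q: assumes "jordan_chain S A \<mu> xs" shows "jordan_chain U B \<mu> (map Q xs)"
proof -
  have xs: "xs \<noteq> []" "set xs \<subseteq> S \<times> S" "is_eigenvector S A \<mu> (xs ! 0)"
    "\<And>j. Suc j < length xs \<Longrightarrow> cx A (xs ! Suc j) - cscale \<mu> (xs ! Suc j) = xs ! j"
    using assms unfolding jordan_chain_def by auto
  have mem: "\<And>j. j < length xs \<Longrightarrow> xs ! j \<in> S \<times> S" using xs(2) nth_mem by blast
  show ?thesis unfolding jordan_chain_def
  proof (intro conjI allI impI)
    show "map Q xs \<noteq> []" using xs by simp
    show "set (map Q xs) \<subseteq> U \<times> U" unfolding set_map using xs(2) Q_mem by blast
    show "is_eigenvector U B \<mu> (map Q xs ! 0)" using xs eig_Q by (simp add: nth_map)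
    fix j assume j: "Suc j < length (map Q xs)"
    then have j': "Suc j < length xs" by simp
    have m: "xs ! Suc j \<in> S \<times> S" using mem j' by blast
    have "cx B (Q (xs ! Suc j)) - cscale \<mu> (Q (xs ! Suc j)) = Q (cx A (xs ! Suc j) - cscale \<mu> (xs ! Suc j))"
      using Q_cx[OF m] Q_cs[OF m] Q_diff[OF cxA_S[OF m] cs_S[OF m]] by simp
    also have "\<dots> = Q (xs ! j)" using xs(4)[OF j'] by simp
    finally show "cx B (map Q xs ! Suc j) - cscale \<mu> (map Q xs ! Suc j) = map Q xs ! j"
      using j' by simp
  qed
qed

lemma jc_Rp: assumes mu: "\<mu> \<noteq> 0" and "jordan_chain U B \<mu> xs" shows "jordan_chain S A \<mu> (map Rp xs)"
proof -
  have xs: "xs \<noteq> []" "set xs \<subseteq> U \<times> U" "is_eigenvector U B \<mu> (xs ! 0)"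
    "\<And>j. Suc j < length xs \<Longrightarrow> cx B (xs ! Suc j) - cscale \<mu> (xs ! Suc j) = xs ! j"
    using assms unfolding jordan_chain_def by auto
  have mem: "\<And>j. j < length xs \<Longrightarrow> xs ! j \<in> U \<times> U" using xs(2) nth_mem by blast
  show ?thesis unfolding jordan_chain_def
  proof (intro conjI allI impI)
    show "map Rp xs \<noteq> []" using xs by simp
    show "set (map Rp xs) \<subseteq> S \<times> S" unfolding set_map using xs(2) Rp_mem by blast
    show "is_eigenvector S A \<mu> (map Rp xs ! 0)" using xs eig_Rp[OF mu] by (simp add: nth_map)
    fix j assume j: "Suc j < length (map Rp xs)"
    then have j': "Suc j < length xs" by simp
    have m: "xs ! Suc j \<in> U \<times> U" using mem j' by blast
    have "cx A (Rp (xs ! Suc j)) - cscale \<mu> (Rp (xs ! Suc j)) = Rp (cx B (xs ! Suc j) - cscale \<mu> (xs ! Suc j))"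
      using Rp_cx[OF m] Rp_cs[OF m] Rp_diff[OF cxB_U[OF m] cs_U[OF m]] by simp
    also have "\<dots> = Rp (xs ! j)" using xs(4)[OF j'] by simp
    finally show "cx A (map Rp xs ! Suc j) - cscale \<mu> (map Rp xs ! Suc j) = map Rp xs ! j"
      using j' by simp
  qed
qed

lemma heads_eq:
  assumes mu: "\<mu> \<noteq> 0"
  shows "{ys ! 0 | ys. jordan_chain U B \<mu> ys \<and> length ys = k} =
         Q ` {xs ! 0 | xs. jordan_chain S A \<mu> xs \<and> length xs = k}"
proof (rule set_eqI iffI)+
  fix y assume "y \<in> {ys ! 0 | ys. jordan_chain U B \<mu> ys \<and> length ys = k}"
  then obtain ys where ys: "jordan_chain U B \<mu> ys" "length ys = k" "y = ys ! 0" by blast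
  then have ne: "ys \<noteq> []" and e: "is_eigenvector U B \<mu> (ys ! 0)" unfolding jordan_chain_def by auto
  have "ys ! 0 = Q (Rp (ys ! 0))" using QRp[OF _ mu] e unfolding is_eigenvector_def by metis
  also have "Rp (ys ! 0) = map Rp ys ! 0" using ne by (simp add: nth_map)
  finally show "y \<in> Q ` {xs ! 0 | xs. jordan_chain S A \<mu> xs \<and> length xs = k}"
    using jc_Rp[OF mu ys(1)] ys(2,3) by fastforce
next
  fix y assume "y \<in> Q ` {xs ! 0 | xs. jordan_chain S A \<mu> xs \<and> length xs = k}"
  then obtain xs where xs: "jordan_chain S A \<mu> xs" "length xs = k" "y = Q (xs ! 0)" by blast
  then have ne: "xs \<noteq> []" unfolding jordan_chain_def by auto
  have "y = map Q xs ! 0" using xs ne by (cases xs) auto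
  then show "y \<in> {ys ! 0 | ys. jordan_chain U B \<mu> ys \<and> length ys = k}"
    using jc_Q[OF xs(1)] xs(2) by fastforce
qed

lemma SS: "subspace (S \<times> S)" using S by (simp add: subspace_Times)

lemma dimQ: "W \<subseteq> S \<times> S \<Longrightarrow> dim (Q ` W) = dim W"
  using dim_image_lin_on[OF SS Q_lin Q_inj] by blast

lemma eigsp_eq:
  assumes mu: "\<mu> \<noteq> 0"
  shows "{w \<in> U \<times> U. cx B w = cscale \<mu> w} = Q ` {w \<in> S \<times> S. cx A w = cscale \<mu> w}"
proof (rule set_eqI iffI)+
  fix w assume "w \<in> {w \<in> U \<times> U. cx B w = cscale \<mu> w}"
  then have w: "w \<in> U \<times> U" "cx B w = cscale \<mu> w" by auto
  have "w = Q (Rp w)" using QRp[OF _ mu] w by metis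
  moreover have "Rp w \<in> S \<times> S" using Rp_mem w(1) by blast
  moreover have "cx A (Rp w) = cscale \<mu> (Rp w)"
    using Rp_cx Rp_cs w by metis
  ultimately show "w \<in> Q ` {w \<in> S \<times> S. cx A w = cscale \<mu> w}"
    by (intro image_eqI[of _ _ "Rp w"]) auto
next
  fix v assume "v \<in> Q ` {w \<in> S \<times> S. cx A w = cscale \<mu> w}"
  then obtain w where w: "w \<in> S \<times> S" "cx A w = cscale \<mu> w" "v = Q w" by blast
  have "Q w \<in> U \<times> U" using Q_mem w by blast
  moreover have "cx B (Q w) = cscale \<mu> (Q w)" using Q_cx Q_cs w by metis
  ultimately show "v \<in> {w \<in> U \<times> U. cx B w = cscale \<mu> w}" unfolding w(3) mem_Collect_eq by blast
qed

theorem main: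
  shows "(\<forall>\<mu>::complex. \<mu> \<noteq> 0 \<longrightarrow>
           (is_eigenvalue S A \<mu> \<longleftrightarrow> is_eigenvalue U B \<mu>) \<and>
           (is_eigenvalue S A \<mu> \<longrightarrow>
              geom_mult S A \<mu> = geom_mult U B \<mu> \<and>
              same_partial_mults S A U B \<mu>)) \<and>
         (\<forall>\<mu>::complex. \<forall>\<Phi>. \<mu> \<noteq> 0 \<longrightarrow> is_eigenvector S A \<mu> \<Phi> \<longrightarrow>
           is_eigenvector U B \<mu> (P (fst \<Phi>), P (snd \<Phi>)))"
proof (intro conjI allI impI)
  fix \<mu> :: complex and \<Phi> assume "\<mu> \<noteq> 0" "is_eigenvector S A \<mu> \<Phi>"
  then show "is_eigenvector U B \<mu> (P (fst \<Phi>), P (snd \<Phi>))" using eig_Q unfolding Q_def by blast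
next
  fix \<mu> :: complex assume mu: "\<mu> \<noteq> 0"
  show "is_eigenvalue S A \<mu> \<longleftrightarrow> is_eigenvalue U B \<mu>"
    unfolding is_eigenvalue_def using eig_Q eig_Rp[OF mu] by blast
  show "geom_mult S A \<mu> = geom_mult U B \<mu>"
    unfolding geom_mult_def cdim_def eigsp_eq[OF mu] by (subst dimQ) auto
  show "same_partial_mults S A U B \<mu>"
    unfolding same_partial_mults_def num_partial_mult_ge_def cdim_def dim_span heads_eq[OF mu]
  proof (intro allI impI)
    fix k :: nat
    have "{xs ! 0 | xs. jordan_chain S A \<mu> xs \<and> length xs = k} \<subseteq> S \<times> S"
      unfolding jordan_chain_def is_eigenvector_def by auto
    then show "dim {xs ! 0 |xs. jordan_chain S A \<mu> xs \<and> length xs = k} div 2 =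
      dim (Q ` {xs ! 0 |xs. jordan_chain S A \<mu> xs \<and> length xs = k}) div 2"
      using dimQ by simp
  qed
qed

end


lemma seg_add: "seg tau h (f + (g :: real \<Rightarrow> 'v::real_vector)) = seg tau h f + seg tau h g"
  by (auto simp: seg_def fun_eq_iff)
lemma seg_scale: "seg tau h (c *\<^sub>R (f :: real \<Rightarrow> 'v::real_vector)) = c *\<^sub>R seg tau h f"
  by (auto simp: seg_def fun_eq_iff scaleR_fun_def)

theorem proposition4p4:
  fixes tau h :: real
    and X Xp Xpm Xt Xpt :: "(real \<Rightarrow> real ^ 'd::finite) set"
    and V :: "(real \<Rightarrow> real ^ 'd) \<Rightarrow> (real \<Rightarrow> real ^ 'd) \<Rightarrow> (real \<Rightarrow> real ^ 'd)"
    and Fs :: "(real \<Rightarrow> real ^ 'd) \<Rightarrow> (real \<Rightarrow> real ^ 'd)"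
    and XM :: "nat \<Rightarrow> 'm::real_vector set"
    and RM :: "nat \<Rightarrow> (real \<Rightarrow> real ^ 'd) \<Rightarrow> 'm"
    and PM :: "nat \<Rightarrow> 'm \<Rightarrow> (real \<Rightarrow> real ^ 'd)"
    and XN :: "nat \<Rightarrow> 'p::real_vector set"
    and RN :: "nat \<Rightarrow> (real \<Rightarrow> real ^ 'd) \<Rightarrow> 'p"
    and PN :: "nat \<Rightarrow> 'p \<Rightarrow> (real \<Rightarrow> real ^ 'd)"
    and M N :: nat
  assumes tau: "tau > 0" and h: "h \<ge> tau"
    \<comment> \<open>the function spaces\<close>
    and X: "subspace X" "supported_in {-tau..0} X"
    and Xp: "subspace Xp" "supported_in {0..h} Xp"
    and Xpm: "subspace Xpm" "supported_in {-tau..h} Xpm"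
    \<comment> \<open>V and F_s\<close>
    and V_into: "\<forall>\<phi>\<in>X. \<forall>z\<in>Xp. V \<phi> z \<in> Xpm"
    and V_lin: "lin2_on X Xp V"
    and V_restr: "\<forall>\<phi>\<in>X. \<forall>z\<in>Xp. restr (-tau) 0 (V \<phi> z) = \<phi>"
    and Fs_into: "\<forall>u\<in>Xpm. Fs u \<in> Xp"
    and Fs_lin: "lin_on Xpm Fs"
    \<comment> \<open>the subspaces X~ and X~+\<close>
    and Xt: "subspace Xt" "Xt \<subseteq> X"
    and Xpt: "subspace Xpt" "Xpt \<subseteq> Xp"
    \<comment> \<open>discretization of X\<close>
    and XM: "\<forall>M. finite_dim_subspace (XM M)"
    and RM: "\<forall>M. lin_on Xt (RM M) \<and> (\<forall>\<phi>\<in>Xt. RM M \<phi> \<in> XM M)"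
    and PM: "\<forall>M. lin_on (XM M) (PM M) \<and> (\<forall>\<Phi>\<in>XM M. PM M \<Phi> \<in> X)"
    and RPM: "\<forall>M. \<forall>\<Phi>\<in>XM M. RM M (PM M \<Phi>) = \<Phi>"
    \<comment> \<open>discretization of X+\<close>
    and XN: "\<forall>N. finite_dim_subspace (XN N)"
    and RN: "\<forall>N. lin_on Xpt (RN N) \<and> (\<forall>z\<in>Xpt. RN N z \<in> XN N)"
    and PN: "\<forall>N. lin_on (XN N) (PN N) \<and> (\<forall>Z\<in>XN N. PN N Z \<in> Xp)"
    and RPN: "\<forall>N. \<forall>Z\<in>XN N. RN N (PN N Z) = Z"
    \<comment> \<open>hypothesis (H4)\<close>
    and H4: "\<forall>M N. PM M ` XM M \<subseteq> PM (Suc M) ` XM (Suc M) \<and>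
                    PN N ` XN N \<subseteq> PN (Suc N) ` XN (Suc N) \<and>
                    PM M ` XM M \<subseteq> Xt \<and> PN N ` XN N \<subseteq> Xpt \<and>
                    (\<forall>\<phi>\<in>PM M ` XM M. \<forall>z\<in>PN N ` XN N.
                        seg tau h (V \<phi> z) \<in> Xt \<and> Fs (V \<phi> z) \<in> Xpt)"
    \<comment> \<open>unique solvability of the fixed point equation defining Z*\<close>
    and uniq: "\<forall>\<Phi>\<in>XM M. \<exists>!Z. Z \<in> XN N \<and> Z = RN N (Fs (V (PM M \<Phi>) (PN N Z)))"
  defines "T \<equiv> T_MN tau h (RM M) (PM M) (XN N) (RN N) (PN N) Fs V"
    and "That \<equiv> (\<lambda>\<phi>. PM M (T_MN tau h (RM M) (PM M) (XN N) (RN N) (PN N) Fs V (RM M \<phi>)))"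
  shows "(\<forall>\<mu>::complex. \<mu> \<noteq> 0 \<longrightarrow>
           (is_eigenvalue (XM M) T \<mu> \<longleftrightarrow> is_eigenvalue Xt That \<mu>) \<and>
           (is_eigenvalue (XM M) T \<mu> \<longrightarrow>
              geom_mult (XM M) T \<mu> = geom_mult Xt That \<mu> \<and>
              same_partial_mults (XM M) T Xt That \<mu>)) \<and>
         (\<forall>\<mu>::complex. \<forall>\<Phi>. \<mu> \<noteq> 0 \<longrightarrow> is_eigenvector (XM M) T \<mu> \<Phi> \<longrightarrow>
           is_eigenvector Xt That \<mu> (PM M (fst \<Phi>), PM M (snd \<Phi>)))"
proof -
  let ?p = "PM M" and ?r = "RM M" and ?S = "XM M" and ?NN = "XN N" and ?pn = "PN N" and ?rn = "RN N"
  define Zs where "Zs = Zstar ?NN ?rn ?pn Fs V ?p"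
  have Sss: "subspace ?S" using XM unfolding finite_dim_subspace_def by blast
  have Nss: "subspace ?NN" using XN unfolding finite_dim_subspace_def by blast
  have pX: "\<And>x. x \<in> ?S \<Longrightarrow> ?p x \<in> X" using PM by blast
  have pXt: "\<And>x. x \<in> ?S \<Longrightarrow> ?p x \<in> Xt" using H4 by blast
  have pnXp: "\<And>x. x \<in> ?NN \<Longrightarrow> ?pn x \<in> Xp" using PN by blast
  have VXpm: "\<And>x z. x \<in> ?S \<Longrightarrow> z \<in> ?NN \<Longrightarrow> V (?p x) (?pn z) \<in> Xpm"
    using V_into pX pnXp by blast
  have H4': "\<And>x z. x \<in> ?S \<Longrightarrow> z \<in> ?NN \<Longrightarrow> seg tau h (V (?p x) (?pn z)) \<in> Xt \<and> Fs (V (?p x) (?pn z)) \<in> Xpt"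
    using H4 by blast
  have plin: "lin_on ?S ?p" using PM by blast
  have pnlin: "lin_on ?NN ?pn" using PN by blast
  have rlin: "lin_on Xt ?r" using RM by blast
  have rnlin: "lin_on Xpt ?rn" using RN by blast
  have ex1: "\<And>x. x \<in> ?S \<Longrightarrow> \<exists>!Z. Z \<in> ?NN \<and> Z = ?rn (Fs (V (?p x) (?pn Z)))"
    using uniq by blast
  have Zs: "\<And>x. x \<in> ?S \<Longrightarrow> Zs x \<in> ?NN \<and> Zs x = ?rn (Fs (V (?p x) (?pn (Zs x))))"
  proof -
    fix x assume x: "x \<in> ?S"
    show "Zs x \<in> ?NN \<and> Zs x = ?rn (Fs (V (?p x) (?pn (Zs x))))"
      unfolding Zs_def Zstar_def by (rule theI'[OF ex1[OF x]])
  qed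
  have Zu: "\<And>x Z. x \<in> ?S \<Longrightarrow> Z \<in> ?NN \<Longrightarrow> Z = ?rn (Fs (V (?p x) (?pn Z))) \<Longrightarrow> Z = Zs x"
  proof -
    fix x Z assume x: "x \<in> ?S" and Z: "Z \<in> ?NN" "Z = ?rn (Fs (V (?p x) (?pn Z)))"
    show "Z = Zs x" unfolding Zs_def Zstar_def
      by (rule the1_equality[OF ex1[OF x], symmetric]) (use Z in blast)
  qed
  have Tdef: "\<And>x. T x = ?r (seg tau h (V (?p x) (?pn (Zs x))))"
    unfolding T_def T_MN_def Zs_def by simp
  have add_S: "\<And>x y. x \<in> ?S \<Longrightarrow> y \<in> ?S \<Longrightarrow> x + y \<in> ?S" using Sss subspace_add by blast
  have sc_S: "\<And>c x. x \<in> ?S \<Longrightarrow> c *\<^sub>R x \<in> ?S" using Sss subspace_scale by blast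
  have add_N: "\<And>x y. x \<in> ?NN \<Longrightarrow> y \<in> ?NN \<Longrightarrow> x + y \<in> ?NN" using Nss subspace_add by blast
  have sc_N: "\<And>c x. x \<in> ?NN \<Longrightarrow> c *\<^sub>R x \<in> ?NN" using Nss subspace_scale by blast
  have Vadd: "\<And>x y Z W. x \<in> ?S \<Longrightarrow> y \<in> ?S \<Longrightarrow> Z \<in> ?NN \<Longrightarrow> W \<in> ?NN \<Longrightarrow>
      V (?p (x + y)) (?pn (Z + W)) = V (?p x) (?pn Z) + V (?p y) (?pn W)"
    using plin pnlin V_lin pX pnXp unfolding lin_on_def lin2_on_def by simp
  have Vsc: "\<And>c x Z. x \<in> ?S \<Longrightarrow> Z \<in> ?NN \<Longrightarrow>
      V (?p (c *\<^sub>R x)) (?pn (c *\<^sub>R Z)) = c *\<^sub>R V (?p x) (?pn Z)"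
    using plin pnlin V_lin pX pnXp unfolding lin_on_def lin2_on_def by simp
  have FsVadd: "\<And>x y Z W. x \<in> ?S \<Longrightarrow> y \<in> ?S \<Longrightarrow> Z \<in> ?NN \<Longrightarrow> W \<in> ?NN \<Longrightarrow>
      ?rn (Fs (V (?p (x + y)) (?pn (Z + W)))) = ?rn (Fs (V (?p x) (?pn Z))) + ?rn (Fs (V (?p y) (?pn W)))"
  proof -
    fix x y Z W assume a: "x \<in> ?S" "y \<in> ?S" "Z \<in> ?NN" "W \<in> ?NN"
    have "Fs (V (?p (x + y)) (?pn (Z + W))) = Fs (V (?p x) (?pn Z)) + Fs (V (?p y) (?pn W))"
      using Vadd[OF a] Fs_lin VXpm a unfolding lin_on_def by simp
    then show "?rn (Fs (V (?p (x + y)) (?pn (Z + W)))) = ?rn (Fs (V (?p x) (?pn Z))) + ?rn (Fs (V (?p y) (?pn W)))"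
      using rnlin H4' a unfolding lin_on_def by simp
  qed
  have FsVsc: "\<And>c x Z. x \<in> ?S \<Longrightarrow> Z \<in> ?NN \<Longrightarrow>
      ?rn (Fs (V (?p (c *\<^sub>R x)) (?pn (c *\<^sub>R Z)))) = c *\<^sub>R ?rn (Fs (V (?p x) (?pn Z)))"
  proof -
    fix c x Z assume a: "x \<in> ?S" "Z \<in> ?NN"
    have "Fs (V (?p (c *\<^sub>R x)) (?pn (c *\<^sub>R Z))) = c *\<^sub>R Fs (V (?p x) (?pn Z))"
      using Vsc[OF a] Fs_lin VXpm a unfolding lin_on_def by simp
    then show "?rn (Fs (V (?p (c *\<^sub>R x)) (?pn (c *\<^sub>R Z)))) = c *\<^sub>R ?rn (Fs (V (?p x) (?pn Z)))"
      using rnlin H4' a unfolding lin_on_def by simp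
  qed
  have Zadd: "\<And>x y. x \<in> ?S \<Longrightarrow> y \<in> ?S \<Longrightarrow> Zs (x + y) = Zs x + Zs y"
  proof -
    fix x y assume a: "x \<in> ?S" "y \<in> ?S"
    show "Zs (x + y) = Zs x + Zs y"
      by (rule Zu[symmetric]) (use a add_S add_N Zs FsVadd in auto)
  qed
  have Zsc: "\<And>c x. x \<in> ?S \<Longrightarrow> Zs (c *\<^sub>R x) = c *\<^sub>R Zs x"
  proof -
    fix c x assume a: "x \<in> ?S"
    show "Zs (c *\<^sub>R x) = c *\<^sub>R Zs x"
      by (rule Zu[symmetric]) (use a sc_S sc_N Zs FsVsc in auto)
  qed
  have Tlin: "lin_on ?S T"
    unfolding lin_on_def
  proof (intro conjI ballI allI)
    fix x y assume a: "x \<in> ?S" "y \<in> ?S"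
    have "T (x + y) = ?r (seg tau h (V (?p x) (?pn (Zs x))) + seg tau h (V (?p y) (?pn (Zs y))))"
      unfolding Tdef Zadd[OF a] Vadd[OF a Zs[OF a(1), THEN conjunct1] Zs[OF a(2), THEN conjunct1]] seg_add ..
    also have "\<dots> = T x + T y" unfolding Tdef using rlin H4' a Zs unfolding lin_on_def by simp
    finally show "T (x + y) = T x + T y" .
  next
    fix c x assume a: "x \<in> ?S"
    have "T (c *\<^sub>R x) = ?r (c *\<^sub>R seg tau h (V (?p x) (?pn (Zs x))))"
      unfolding Tdef Zsc[OF a] Vsc[OF a Zs[OF a, THEN conjunct1]] seg_scale ..
    also have "\<dots> = c *\<^sub>R T x" unfolding Tdef using rlin H4' a Zs unfolding lin_on_def by simp
    finally show "T (c *\<^sub>R x) = c *\<^sub>R T x" .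
  qed
  have TS: "\<And>x. x \<in> ?S \<Longrightarrow> T x \<in> ?S"
    unfolding Tdef using RM H4' Zs by blast
  interpret absset ?S Xt T ?p ?r That
  proof
    show "subspace ?S" by (rule Sss)
    show "subspace Xt" by (rule Xt(1))
    show "lin_on ?S T" by (rule Tlin)
    show "\<And>x. x \<in> ?S \<Longrightarrow> T x \<in> ?S" by (rule TS)
    show "lin_on ?S ?p" by (rule plin)
    show "\<And>x. x \<in> ?S \<Longrightarrow> ?p x \<in> Xt" by (rule pXt)
    show "lin_on Xt ?r" by (rule rlin)
    show "\<And>x. x \<in> Xt \<Longrightarrow> ?r x \<in> ?S" using RM by blast
    show "\<And>x. x \<in> ?S \<Longrightarrow> ?r (?p x) = x" using RPM by blast
    show "That = (\<lambda>u. ?p (T (?r u)))" unfolding That_def T_def ..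
  qed
  show ?thesis by (rule main)
qed

end
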